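(* Let $X_0,X_1,\ldots$ be a stationary mean-zero Gaussian sequence with covariance $\Gamma(k)=\mathrm{E}[X_0X_k]$, $\Gamma(0)=1$, having a spectral density $f$ (so $\Gamma(k)=\int_{-\pi}^{\pi}e^{-ik\phi}f(\phi)\,d\phi$) which is continuous and strictly positive on $[-\pi,\pi]$. Let $K=K_n$ be real numbers with $K=o\!\left(\sqrt{n/\log\log n}\right)$. With $$A(x)=\sum_{k=0}^{n}\sum_{j=0}^{n}\Gamma(k-j)x^{k+j},\quad B(x)=\sum_{k=0}^{n}\sum_{j=0}^{n}\Gamma(k-j)\,k\,x^{k+j-1},\quad C(x)=\sum_{k=0}^{n}\sum_{j=0}^{n}\Gamma(k-j)\,kj\,x^{k+j-2},$$ and $$F_2(x)=\frac{1}{\pi}\,\frac{\sqrt{2}\,|B(x)K|}{A(x)^{3/2}}\exp\!\left(-\frac{K^2}{2A(x)}\right)\mathrm{erf}\!\left(\frac{|B(x)K|}{\sqrt{2A(x)\left(A(x)C(x)-B(x)^2\right)}}\right),$$ we have, as $n\to\infty$, $$\int_1^{\infty}F_2(x)\,dx=o(1)\quad\text{and}\quad\int_{-\infty}^{-1}F_2(x)\,dx=o(1).$$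
   Context: $\mathrm{erf}(u)=\frac{2}{\sqrt{\pi}}\int_0^u e^{-t^2}dt$. *)

theory Defs
  imports "HOL-Analysis.Analysis" "HOL-Library.Landau_Symbols"
begin

definition erf_fn :: "real \<Rightarrow> real" where
  "erf_fn u = 2 / sqrt pi *
     (if 0 \<le> u then integral {0..u} (\<lambda>t. exp (- t\<^sup>2))
      else - integral {u..0} (\<lambda>t. exp (- t\<^sup>2)))"

definition covA :: "(int \<Rightarrow> real) \<Rightarrow> nat \<Rightarrow> real \<Rightarrow> real" where
  "covA \<Gamma> n x = (\<Sum>k\<le>n. \<Sum>j\<le>n. \<Gamma> (int k - int j) * x ^ (k + j))"

definition covB :: "(int \<Rightarrow> real) \<Rightarrow> nat \<Rightarrow> real \<Rightarrow> real" where
  "covB \<Gamma> n x = (\<Sum>k\<le>n. \<Sum>j\<le>n. \<Gamma> (int k - int j) * real k * x ^ (k + j - 1))"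

definition covC :: "(int \<Rightarrow> real) \<Rightarrow> nat \<Rightarrow> real \<Rightarrow> real" where
  "covC \<Gamma> n x = (\<Sum>k\<le>n. \<Sum>j\<le>n. \<Gamma> (int k - int j) * (real k * real j) * x ^ (k + j - 2))"

definition F2 :: "(int \<Rightarrow> real) \<Rightarrow> nat \<Rightarrow> real \<Rightarrow> real \<Rightarrow> real" where
  "F2 \<Gamma> n K x =
    (let A = covA \<Gamma> n x; B = covB \<Gamma> n x; C = covC \<Gamma> n x in
     (1 / pi) * (sqrt 2 * \<bar>B * K\<bar> / A powr (3/2)) * exp (- K\<^sup>2 / (2 * A))
       * erf_fn (\<bar>B * K\<bar> / sqrt (2 * A * (A * C - B\<^sup>2))))"

end

theory Submission
  imports Defs "HOL-Computational_Algebra.Fundamental_Theorem_Algebra" "HOL-Real_Asymp.Real_Asymp"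
begin


lemma factor_mono:
  fixes w r :: complex
  assumes w: "cmod w = 1" and r: "cmod r = 1" and st: "1 \<le> s" "s \<le> t"
  shows "cmod (of_real s * w - r) \<le> cmod (of_real t * w - r)"
proof -
  obtain a b where wab: "w = Complex a b" by (cases w)
  obtain u v where ruv: "r = Complex u v" by (cases r)
  have w2: "a^2 + b^2 = 1" using w wab by (simp add: cmod_def)
  have r2: "u^2 + v^2 = 1" using r ruv by (simp add: cmod_def)
  have c1: "a*u + b * v \<le> 1"
  proof -
    have "0 \<le> (a-u)^2 + (b-v)^2" by simp
    thus ?thesis using w2 r2 by (simp add: power2_eq_square algebra_simps)
  qed
  have eq: "\<And>x. (cmod (of_real x * w - r))^2 = x^2 - 2 * x * (a*u+b * v) + 1"
  proof -
    fix x :: real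
    have "(cmod (of_real x * w - r))^2 = (x*a - u)^2 + (x*b - v)^2" by (simp add: cmod_power2 wab ruv)
    also have "\<dots> = x^2*(a^2+b^2) - 2 * x * (a*u+b * v) + (u^2+v^2)" by (simp add: power2_eq_square algebra_simps)
    finally show "(cmod (of_real x * w - r))^2 = x^2 - 2 * x * (a*u+b * v) + 1" using w2 r2 by simp
  qed
  have "s^2 - 2 * s * (a*u+b * v) + 1 \<le> t^2 - 2 * t * (a*u+b * v) + 1"
  proof -
    have "t^2 - 2 * t * (a*u+b * v) - (s^2 - 2 * s * (a*u+b * v)) = (t-s)*(t+s-2*(a*u+b * v))"
      by (simp add: power2_eq_square algebra_simps)
    also have "\<dots> \<ge> 0" using st c1 by (intro mult_nonneg_nonneg) auto
    finally show ?thesis by simp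
  qed
  hence "(cmod (of_real s * w - r))^2 \<le> (cmod (of_real t * w - r))^2" by (simp add: eq)
  thus ?thesis by (simp add: power2_le_iff_abs_le)
qed

lemma geom_root:
  fixes r :: complex
  assumes "(\<Sum>k\<le>n. r^k) = 0"
  shows "cmod r = 1"
proof -
  have "(1 - r) * (\<Sum>k\<le>n. r^k) = 1 - r^Suc n" by (rule sum_gp_basic)
  hence "r ^ Suc n = 1" using assms by simp
  hence "cmod r ^ Suc n = 1" by (metis norm_one norm_power)
  hence "cmod r ^ Suc n = 1 ^ Suc n" by simp
  thus ?thesis by (rule power_eq_imp_eq_base) auto
qed

lemma root_mono:
  fixes w :: complex
  assumes w: "cmod w = 1" and st: "1 \<le> s" "s \<le> t"
  shows "cmod (\<Sum>k\<le>n. (of_real s * w)^k) \<le> cmod (\<Sum>k\<le>n. (of_real t * w)^k)"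
proof -
  define p :: "complex poly" where "p = (\<Sum>k\<le>n. monom 1 k)"
  have pz: "poly p z = (\<Sum>k\<le>n. z^k)" for z
    by (simp add: p_def poly_sum poly_monom)
  have p0: "p \<noteq> 0" proof assume "p = 0" hence "poly p 0 = 0" by simp
    thus False by (simp add: pz power_0_left sum.atMost_shift) qed
  have fin: "finite {z. poly p z = 0}" using p0 poly_roots_finite by blast
  define R where "R = {r. poly p r = 0}"
  define D where "D = (\<Prod>r\<in>R. [:-r, 1:] ^ order r p)"
  have e: "smult (lead_coeff p) D = p" unfolding D_def R_def by (rule complex_poly_decompose)
  have dec: "poly p z = lead_coeff p * (\<Prod>r\<in>R. (z - r) ^ order r p)" for z
  proof -
    have "poly p z = poly (smult (lead_coeff p) D) z" by (simp only: e)
    also have "\<dots> = lead_coeff p * (\<Prod>r\<in>R. (z - r) ^ order r p)"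
      by (simp add: D_def poly_prod)
    finally show ?thesis .
  qed
  have nm: "cmod (poly p z) = cmod (lead_coeff p) * (\<Prod>r\<in>R. cmod (z - r) ^ order r p)" for z
    by (simp only: dec norm_mult prod_norm[symmetric] norm_power)
  have fac: "cmod (of_real s * w - r) ^ order r p \<le> cmod (of_real t * w - r) ^ order r p"
    if "r \<in> R" for r
  proof -
    from that have "(\<Sum>k\<le>n. r^k) = 0" by (simp add: pz R_def)
    hence "cmod r = 1" by (rule geom_root)
    hence "cmod (of_real s * w - r) \<le> cmod (of_real t * w - r)" using factor_mono[OF w _ st] by blast
    thus ?thesis by (rule power_mono) simp
  qed
  have "(\<Prod>r\<in>R. cmod (of_real s * w - r) ^ order r p) \<le> (\<Prod>r\<in>R. cmod (of_real t * w - r) ^ order r p)"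
    by (rule prod_mono) (use fac in simp)
  hence "cmod (poly p (of_real s * w)) \<le> cmod (poly p (of_real t * w))"
    unfolding nm by (rule mult_left_mono) simp
  thus ?thesis by (simp only: pz)
qed



lemma gauss_int_le:
  assumes "a \<le> b"
  shows "integral {a..b} (\<lambda>t. exp (- t\<^sup>2)) \<le> pi"
proof -
  have c1: "continuous_on {a..b} (\<lambda>t::real. exp (- t\<^sup>2))" by (intro continuous_intros)
  have c2: "continuous_on {a..b} (\<lambda>t::real. 1 / (1 + t\<^sup>2))"
    by (intro continuous_intros) (smt (verit) zero_le_power2)
  have fi: "((\<lambda>t::real. 1 / (1 + t\<^sup>2)) has_integral (arctan b - arctan a)) {a..b}"
  proof (rule fundamental_theorem_of_calculus[OF assms])
    fix x :: real assume "x \<in> {a..b}"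
    show "(arctan has_vector_derivative 1 / (1 + x\<^sup>2)) (at x within {a..b})"
    proof -
      have "(arctan has_real_derivative 1 / (1 + x\<^sup>2)) (at x)"
        using DERIV_arctan[of x] by (simp add: inverse_eq_divide)
      hence "(arctan has_real_derivative 1 / (1 + x\<^sup>2)) (at x within {a..b})"
        by (rule has_field_derivative_at_within)
      thus ?thesis by (simp add: has_real_derivative_iff_has_vector_derivative)
    qed
  qed
  have "integral {a..b} (\<lambda>t. exp (- t\<^sup>2)) \<le> integral {a..b} (\<lambda>t::real. 1 / (1 + t\<^sup>2))"
  proof (rule integral_le)
    show "(\<lambda>t. exp (- t\<^sup>2)) integrable_on {a..b}" using c1 integrable_continuous_interval by blast
    show "(\<lambda>t::real. 1 / (1 + t\<^sup>2)) integrable_on {a..b}" using fi by blast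
    fix t :: real assume "t \<in> {a..b}"
    have "1 + t\<^sup>2 \<le> exp (t\<^sup>2)" by (rule exp_ge_add_one_self)
    hence "exp (- t\<^sup>2) * (1 + t\<^sup>2) \<le> exp (-t\<^sup>2) * exp (t\<^sup>2)" by (intro mult_left_mono) auto
    hence "exp (- t\<^sup>2) * (1 + t\<^sup>2) \<le> 1" by (simp add: exp_minus field_simps)
    thus "exp (- t\<^sup>2) \<le> 1 / (1 + t\<^sup>2)" by (simp add: field_simps add_pos_nonneg)
  qed
  also have "\<dots> = arctan b - arctan a" using fi by (rule integral_unique)
  also have "\<dots> \<le> pi" using arctan_bounded[of a] arctan_bounded[of b] by linarith
  finally show ?thesis .
qed

lemma gauss_int_nonneg:
  fixes a b :: real shows "0 \<le> integral {a..b} (\<lambda>t. exp (- t\<^sup>2))"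
  by (rule Henstock_Kurzweil_Integration.integral_nonneg) (auto intro!: integrable_continuous_interval continuous_intros)

lemma erf_bound: "\<bar>erf_fn u\<bar> \<le> 2 * sqrt pi"
proof -
  have "\<bar>(if 0 \<le> u then integral {0..u} (\<lambda>t. exp (- t\<^sup>2))
      else - integral {u..0} (\<lambda>t. exp (- t\<^sup>2)))\<bar> \<le> pi"
    using gauss_int_le[of 0 u] gauss_int_le[of u 0] gauss_int_nonneg[of 0 u] gauss_int_nonneg[of u 0]
    by auto
  moreover have "\<bar>2 / sqrt pi\<bar> = 2 / sqrt pi" by simp
  ultimately have "\<bar>erf_fn u\<bar> \<le> 2 / sqrt pi * pi"
    unfolding erf_fn_def abs_mult by (metis mult_left_mono abs_ge_zero)
  also have "2 / sqrt pi * pi = 2 * sqrt pi"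
    by (metis real_sqrt_mult_self real_div_sqrt pi_gt_zero less_eq_real_def times_divide_eq_left times_divide_eq_right)
  finally show ?thesis .
qed

lemma erf_mono: "mono erf_fn"
proof (rule monoI)
  fix u v :: real assume uv: "u \<le> v"
  let ?h = "\<lambda>t::real. exp (- t\<^sup>2)"
  have int: "?h integrable_on {a..b}" for a b
    by (intro integrable_continuous_interval continuous_intros)
  have "(if 0 \<le> u then integral {0..u} ?h else - integral {u..0} ?h)
      \<le> (if 0 \<le> v then integral {0..v} ?h else - integral {v..0} ?h)"
  proof (cases "0 \<le> u")
    case True
    have "integral {0..u} ?h \<le> integral {0..v} ?h"
      using uv by (intro integral_subset_le int) auto
    thus ?thesis using True uv by auto
  next
    case False
    show ?thesis
    proof (cases "0 \<le> v")
      case True thus ?thesis using False gauss_int_nonneg[of u 0] gauss_int_nonneg[of 0 v] by auto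
    next
      case F2: False
      have "integral {v..0} ?h \<le> integral {u..0} ?h"
        using uv by (intro integral_subset_le int) auto
      thus ?thesis using False F2 by auto
    qed
  qed
  thus "erf_fn u \<le> erf_fn v" unfolding erf_fn_def by (intro mult_left_mono) auto
qed

lemma erf_measurable[measurable]: "erf_fn \<in> borel_measurable borel"
  by (rule borel_measurable_mono[OF erf_mono])



definition Fgen :: "(real\<Rightarrow>real) \<Rightarrow> (real\<Rightarrow>real) \<Rightarrow> (real\<Rightarrow>real) \<Rightarrow> real \<Rightarrow> real \<Rightarrow> real" where
  "Fgen A B C K x = (1 / pi) * (sqrt 2 * \<bar>B x * K\<bar> / A x powr (3/2)) * exp (- K\<^sup>2 / (2 * A x))
       * erf_fn (\<bar>B x * K\<bar> / sqrt (2 * A x * (A x * C x - (B x)\<^sup>2)))"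

lemma const_eq:
  fixes a b k :: real
  shows "(1 / pi) * (sqrt 2 * (b * \<bar>k\<bar>) / (a * sqrt a)) * 1 * (2 * sqrt pi) = (2 * sqrt 2 / sqrt pi * \<bar>k\<bar>) * (b / (a * sqrt a))"
proof -
  have sp: "sqrt pi * sqrt pi = pi" by simp
  have "(1 / pi) * (sqrt 2 * (b * \<bar>k\<bar>) / (a * sqrt a)) * 1 * (2 * sqrt pi) = 
     (2 * sqrt 2 * \<bar>k\<bar>) * (b / (a * sqrt a)) * (sqrt pi / pi)" by (simp add: algebra_simps)
  also have "sqrt pi / pi = 1 / sqrt pi" by (metis sp nonzero_mult_div_cancel_left divide_divide_eq_right div_by_1 mult.commute real_sqrt_eq_zero_cancel_iff pi_neq_zero)
  finally show ?thesis by simp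
qed

lemma core:
  fixes A B C :: "real \<Rightarrow> real" and K :: real
  assumes dA: "\<And>x. 1 \<le> x \<Longrightarrow> (A has_real_derivative 2 * B x) (at x)"
    and cA: "continuous_on UNIV A" and cB: "continuous_on UNIV B" and cC: "continuous_on UNIV C"
    and monoA: "\<And>x y. 1 \<le> x \<Longrightarrow> x \<le> y \<Longrightarrow> A x \<le> A y"
    and A1: "0 < A 1"
    and Ainf: "filterlim A at_top at_top"
  shows "Fgen A B C K absolutely_integrable_on {1..} \<and>
         \<bar>integral {1..} (Fgen A B C K)\<bar> \<le> 2 * sqrt 2 / sqrt pi * \<bar>K\<bar> / sqrt (A 1)"
proof -
  have Apos: "0 < A x" if "1 \<le> x" for x using monoA[OF order_refl that] A1 by linarith
  have Bnn: "0 \<le> B x" if x: "1 \<le> x" for x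
  proof (rule ccontr)
    assume "\<not> 0 \<le> B x"
    hence "2 * B x < 0" by simp
    from DERIV_neg_dec_right[OF dA[OF x] this] obtain d where d: "d > 0" "\<forall>h>0. h < d \<longrightarrow> A (x + h) < A x" by blast
    have "A (x + d/2) < A x" using d by simp
    moreover have "A x \<le> A (x + d/2)" using monoA[OF x] d by simp
    ultimately show False by simp
  qed
  define gg where "gg x = B x / (A x * sqrt (A x))" for x
  define G where "G x = - inverse (sqrt (A x))" for x
  have dG: "(G has_real_derivative gg x) (at x)" if x: "1 \<le> x" for x
  proof -
    have ax: "0 < A x" using Apos x .
    have dS: "((\<lambda>x. sqrt (A x)) has_real_derivative inverse (sqrt (A x)) / 2 * (2 * B x)) (at x)"
      by (rule DERIV_chain2[OF DERIV_real_sqrt[OF ax] dA[OF x]])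
    have "((\<lambda>x. - inverse (sqrt (A x))) has_real_derivative
        - (- (inverse (sqrt (A x)) * (inverse (sqrt (A x)) / 2 * (2 * B x)) * inverse (sqrt (A x))))) (at x)"
      by (intro DERIV_minus DERIV_inverse' dS) (use ax in auto)
    moreover have "- (- (inverse (sqrt (A x)) * (inverse (sqrt (A x)) / 2 * (2 * B x)) * inverse (sqrt (A x)))) = gg x"
      using ax by (simp add: gg_def field_simps)
    ultimately show ?thesis unfolding G_def[abs_def] by simp
  qed
  have FTC: "(gg has_integral (G y - G 1)) {1..y}" if y: "1 \<le> y" for y
  proof (rule fundamental_theorem_of_calculus[OF y])
    fix x assume "x \<in> {1..y}"
    hence "(G has_real_derivative gg x) (at x within {1..y})"
      using dG by (auto intro: has_field_derivative_at_within)
    thus "(G has_vector_derivative gg x) (at x within {1..y})"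
      by (simp add: has_real_derivative_iff_has_vector_derivative)
  qed
  have ggint: "gg integrable_on {1..y}" for y
  proof (cases "1 \<le> y")
    case True thus ?thesis using FTC by blast
  next
    case False hence "{1..y} = {}" by auto
    thus ?thesis by (simp add: integrable_on_empty)
  qed
  have lim: "((\<lambda>y. integral {1..y} gg) \<longlongrightarrow> inverse (sqrt (A 1))) at_top"
  proof -
    have "filterlim (\<lambda>y. sqrt (A y)) at_top at_top"
      by (rule filterlim_compose[OF sqrt_at_top Ainf])
    hence "((\<lambda>y. inverse (sqrt (A y))) \<longlongrightarrow> 0) at_top" by (rule tendsto_inverse_0_at_top)
    hence T: "((\<lambda>y. inverse (sqrt (A 1)) - inverse (sqrt (A y))) \<longlongrightarrow> inverse (sqrt (A 1)) - 0) at_top"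
      by (intro tendsto_intros)
    moreover have ev: "eventually (\<lambda>y. inverse (sqrt (A 1)) - inverse (sqrt (A y)) = integral {1..y} gg) at_top"
      using eventually_ge_at_top[of 1]
    proof eventually_elim
      case (elim y)
      from FTC[OF elim] show ?case by (simp add: G_def integral_unique)
    qed
    show ?thesis using Lim_transform_eventually[OF T[unfolded diff_zero] ev] .
  qed
  have ggI: "(gg has_integral inverse (sqrt (A 1))) {1..}"
    by (rule has_integral_to_inf[OF ggint lim]) (auto simp: gg_def intro!: divide_nonneg_pos mult_pos_pos Apos Bnn)
  define c0 where "c0 = 2 * sqrt 2 / sqrt pi * \<bar>K\<bar>"
  have c0nn: "0 \<le> c0" by (simp add: c0_def)
  have bound: "norm (Fgen A B C K x) \<le> c0 * gg x" if "x \<in> {1..}" for x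
  proof -
    have x: "1 \<le> x" using that by simp
    have ax: "0 < A x" using Apos x .
    have p32: "A x powr (3/2) = A x * sqrt (A x)"
    proof -
      have "A x powr (3/2) = A x powr (1 + 1/2)" by simp
      also have "\<dots> = A x powr 1 * A x powr (1/2)" by (rule powr_add)
      also have "\<dots> = A x * sqrt (A x)" using ax by (simp add: powr_half_sqrt)
      finally show ?thesis .
    qed
    have e1: "exp (- K\<^sup>2 / (2 * A x)) \<le> 1" using ax by simp
    define P where "P = (1 / pi) * (sqrt 2 * (B x * \<bar>K\<bar>) / (A x * sqrt (A x)))"
    define e where "e = exp (- K\<^sup>2 / (2 * A x))"
    define u where "u = erf_fn (\<bar>B x * K\<bar> / sqrt (2 * A x * (A x * C x - (B x)\<^sup>2)))"
    have BK: "\<bar>B x * K\<bar> = B x * \<bar>K\<bar>" using Bnn[OF x] by (simp add: abs_mult)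
    have Pnn: "0 \<le> P" unfolding P_def using Bnn[OF x] ax by simp
    have "Fgen A B C K x = P * e * u" unfolding Fgen_def p32 BK P_def e_def u_def by (rule refl)
    hence "norm (Fgen A B C K x) = P * e * \<bar>u\<bar>" using Pnn by (simp add: abs_mult e_def)
    also have "\<dots> \<le> P * 1 * (2 * sqrt pi)"
      using Pnn e1 erf_bound[of "\<bar>B x * K\<bar> / sqrt (2 * A x * (A x * C x - (B x)\<^sup>2))"]
      unfolding e_def u_def by (intro mult_mono) auto
    also have "\<dots> = c0 * gg x" unfolding P_def c0_def gg_def by (rule const_eq)
    finally show ?thesis .
  qed
  have meas: "Fgen A B C K \<in> borel_measurable (lebesgue_on {1..})"
  proof -
    have [measurable]: "A \<in> borel_measurable borel" "B \<in> borel_measurable borel" "C \<in> borel_measurable borel"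
      using cA cB cC by (auto intro: borel_measurable_continuous_onI)
    have "Fgen A B C K \<in> borel_measurable borel" unfolding Fgen_def[abs_def] by measurable
    hence "Fgen A B C K \<in> borel_measurable lborel" by simp
    hence "Fgen A B C K \<in> borel_measurable lebesgue" by (rule measurable_completion)
    thus ?thesis by (rule measurable_restrict_space1)
  qed
  have cgI: "((\<lambda>x. c0 * gg x) has_integral c0 * inverse (sqrt (A 1))) {1..}"
    using ggI by (rule has_integral_mult_right)
  have cgInt: "(\<lambda>x. c0 * gg x) integrable_on {1..}" using cgI by blast
  have Fint: "Fgen A B C K integrable_on {1..}"
    by (rule measurable_bounded_by_integrable_imp_integrable[OF meas cgInt bound]) (auto intro: sets_completionI_sets)
  have Fabs: "Fgen A B C K absolutely_integrable_on {1..}"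
    by (rule absolutely_integrable_integrable_bound[OF bound Fint cgInt])
  have "norm (integral {1..} (Fgen A B C K)) \<le> integral {1..} (\<lambda>x. c0 * gg x)"
    by (rule integral_norm_bound_integral[OF Fint cgInt bound])
  also have "\<dots> = c0 * inverse (sqrt (A 1))" using cgI by (rule integral_unique)
  also have "\<dots> = 2 * sqrt 2 / sqrt pi * \<bar>K\<bar> / sqrt (A 1)" by (simp add: c0_def divide_inverse)
  finally show ?thesis using Fabs by simp
qed



definition Q :: "nat \<Rightarrow> (nat \<Rightarrow> real) \<Rightarrow> real \<Rightarrow> real" where
  "Q n a \<phi> = (\<Sum>k\<le>n. \<Sum>j\<le>n. a k * a j * cos ((real k - real j) * \<phi>))"

lemma Q_cont: "continuous_on S (Q n a)"
  unfolding Q_def[abs_def] by (intro continuous_intros)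

lemma Q_cmod: "Q n a \<phi> = (cmod (\<Sum>k\<le>n. of_real (a k) * cis (real k * \<phi>)))\<^sup>2"
proof -
  let ?z = "\<Sum>k\<le>n. of_real (a k) * cis (real k * \<phi>)"
  have "complex_of_real ((cmod ?z)\<^sup>2) = ?z * cnj ?z" by (rule complex_norm_square)
  also have "\<dots> = (\<Sum>k\<le>n. \<Sum>j\<le>n. of_real (a k * a j) * cis ((real k - real j) * \<phi>))"
  proof -
    have e: "(of_real (a k) * cis (real k * \<phi>)) * cnj (of_real (a j) * cis (real j * \<phi>)) =
        of_real (a k * a j) * cis ((real k - real j) * \<phi>)" for k j
    proof -
      have "cis (real k * \<phi>) * cis (-(real j * \<phi>)) = cis ((real k - real j) * \<phi>)"
        by (simp add: cis_mult left_diff_distrib)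
      thus ?thesis by (simp add: cis_cnj mult_ac)
    qed
    show ?thesis by (simp only: sum_product cnj_sum e)
  qed
  finally have "(cmod ?z)\<^sup>2 = Re (\<Sum>k\<le>n. \<Sum>j\<le>n. of_real (a k * a j) * cis ((real k - real j) * \<phi>))"
    by (metis Re_complex_of_real)
  also have "\<dots> = Q n a \<phi>" by (simp add: Q_def Re_sum)
  finally show ?thesis by simp
qed

lemma Q_nonneg: "0 \<le> Q n a \<phi>" by (simp add: Q_cmod)

lemma cos_int_int:
  fixes m :: int
  shows "((\<lambda>\<phi>. cos (of_int m * \<phi>)) has_integral (if m = 0 then 2 * pi else 0)) {-pi..pi}"
proof (cases "m = 0")
  case True
  have "((\<lambda>\<phi>::real. 1) has_integral 2 * pi) {-pi..pi}"
    using has_integral_const_real[of "1::real" "-pi" pi] by simp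
  thus ?thesis using True by simp
next
  case False
  have "((\<lambda>\<phi>. cos (of_int m * \<phi>)) has_integral (sin (of_int m * pi) / of_int m - sin (of_int m * (-pi)) / of_int m)) {-pi..pi}"
  proof (rule fundamental_theorem_of_calculus)
    show "- pi \<le> pi" by simp
    fix x assume "x \<in> {-pi..pi}"
    have "((\<lambda>\<phi>. sin (of_int m * \<phi>) / of_int m) has_real_derivative cos (of_int m * x)) (at x)"
      using False by (auto intro!: derivative_eq_intros)
    thus "((\<lambda>\<phi>. sin (of_int m * \<phi>) / of_int m) has_vector_derivative cos (of_int m * x)) (at x within {-pi..pi})"
      by (simp add: has_real_derivative_iff_has_vector_derivative[symmetric] has_field_derivative_at_within)
  qed
  moreover have "sin (of_int m * pi) = 0" using sin_times_pi_eq_0[of "of_int m"] by simp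
  ultimately show ?thesis using False by simp
qed

lemma Q_int: "(Q n a has_integral 2 * pi * (\<Sum>k\<le>n. (a k)\<^sup>2)) {-pi..pi}"
proof -
  have "((\<lambda>\<phi>. \<Sum>k\<le>n. \<Sum>j\<le>n. a k * a j * cos (of_int (int k - int j) * \<phi>)) has_integral
      (\<Sum>k\<le>n. \<Sum>j\<le>n. a k * a j * (if int k - int j = 0 then 2 * pi else 0))) {-pi..pi}"
    by (intro has_integral_sum finite_atMost has_integral_mult_right cos_int_int)
  moreover have "(\<Sum>k\<le>n. \<Sum>j\<le>n. a k * a j * (if int k - int j = 0 then 2 * pi else 0)) = 2 * pi * (\<Sum>k\<le>n. (a k)\<^sup>2)"
  proof -
    have "(\<Sum>k\<le>n. \<Sum>j\<le>n. a k * a j * (if int k - int j = 0 then 2 * pi else 0))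
        = (\<Sum>k\<le>n. \<Sum>j\<le>n. (if k = j then a k * a j * (2 * pi) else 0))"
      by (intro sum.cong refl) auto
    also have "\<dots> = (\<Sum>k\<le>n. a k * a k * (2 * pi))" by (simp add: sum.delta)
    finally show ?thesis by (simp add: sum_distrib_left power2_eq_square mult_ac)
  qed
  moreover have "(\<lambda>\<phi>. \<Sum>k\<le>n. \<Sum>j\<le>n. a k * a j * cos (of_int (int k - int j) * \<phi>)) = Q n a"
    by (simp add: Q_def[abs_def])
  ultimately show ?thesis by simp
qed

lemma Q_mono:
  assumes "1 \<le> s" "s \<le> t"
  shows "Q n (\<lambda>k. s ^ k) \<phi> \<le> Q n (\<lambda>k. t ^ k) \<phi>"
    and "Q n (\<lambda>k. (-s) ^ k) \<phi> \<le> Q n (\<lambda>k. (-t) ^ k) \<phi>"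
proof -
  have eq1: "(\<Sum>k\<le>n. of_real (x ^ k) * cis (real k * \<phi>)) = (\<Sum>k\<le>n. (of_real x * cis \<phi>) ^ k)" for x
    by (simp add: Complex.DeMoivre power_mult_distrib)
  have eq2: "(\<Sum>k\<le>n. of_real ((-x) ^ k) * cis (real k * \<phi>)) = (\<Sum>k\<le>n. (of_real x * (- cis \<phi>)) ^ k)" for x
  proof (intro sum.cong refl)
    fix k
    have "(of_real x * (- cis \<phi>)) ^ k = (-(of_real x * cis \<phi>)) ^ k" by simp
    also have "\<dots> = (-1) ^ k * (of_real x * cis \<phi>) ^ k" by (rule power_minus)
    also have "\<dots> = (-1) ^ k * (of_real x ^ k * cis (real k * \<phi>))"
      by (simp only: power_mult_distrib Complex.DeMoivre)
    also have "\<dots> = of_real ((-x) ^ k) * cis (real k * \<phi>)"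
    proof -
      have "of_real ((-x) ^ k) = ((-1) ^ k * of_real x ^ k :: complex)"
        by (metis of_real_power power_minus of_real_minus of_real_1)
      thus ?thesis by (simp add: mult.assoc)
    qed
    finally show "of_real ((-x) ^ k) * cis (real k * \<phi>) = (of_real x * (- cis \<phi>)) ^ k" by simp
  qed
  have c1: "cmod (cis \<phi>) = 1" "cmod (- cis \<phi>) = 1" by simp_all
  show "Q n (\<lambda>k. s ^ k) \<phi> \<le> Q n (\<lambda>k. t ^ k) \<phi>"
    unfolding Q_cmod eq1 using root_mono[OF c1(1) assms, of n] by (simp add: power_mono)
  show "Q n (\<lambda>k. (-s) ^ k) \<phi> \<le> Q n (\<lambda>k. (-t) ^ k) \<phi>"
    unfolding Q_cmod eq2 using root_mono[OF c1(2) assms, of n] by (simp add: power_mono)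
qed



lemma Gcos:
  fixes \<Gamma> :: "int \<Rightarrow> real" and f :: "real \<Rightarrow> real"
  assumes f_cont: "continuous_on {-pi..pi} f"
    and spectral: "\<And>k. complex_of_real (\<Gamma> k) =
        integral {-pi..pi} (\<lambda>\<phi>. exp (- \<i> * of_int k * of_real \<phi>) * of_real (f \<phi>))"
  shows "((\<lambda>\<phi>. cos (of_int m * \<phi>) * f \<phi>) has_integral \<Gamma> m) {-pi..pi}"
proof -
  let ?g = "\<lambda>\<phi>. exp (- \<i> * of_int m * of_real \<phi>) * of_real (f \<phi>)"
  have "continuous_on {-pi..pi} ?g" by (intro continuous_intros f_cont)
  hence "?g integrable_on {-pi..pi}" by (rule integrable_continuous_interval)
  hence "(?g has_integral integral {-pi..pi} ?g) {-pi..pi}" by (rule integrable_integral)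
  hence "((\<lambda>\<phi>. Re (?g \<phi>)) has_integral Re (integral {-pi..pi} ?g)) {-pi..pi}" by (rule has_integral_Re)
  moreover have "Re (integral {-pi..pi} ?g) = \<Gamma> m" using spectral[of m] by (metis Re_complex_of_real)
  moreover have "(\<lambda>\<phi>. Re (?g \<phi>)) = (\<lambda>\<phi>. cos (of_int m * \<phi>) * f \<phi>)"
    by (rule ext) (simp add: Re_exp)
  ultimately show ?thesis by simp
qed

lemma quad:
  fixes \<Gamma> :: "int \<Rightarrow> real" and f :: "real \<Rightarrow> real"
  assumes G: "\<And>m. ((\<lambda>\<phi>. cos (of_int m * \<phi>) * f \<phi>) has_integral \<Gamma> m) {-pi..pi}"
  shows "((\<lambda>\<phi>. f \<phi> * Q n a \<phi>) has_integral (\<Sum>k\<le>n. \<Sum>j\<le>n. \<Gamma> (int k - int j) * (a k * a j))) {-pi..pi}"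
proof -
  have "((\<lambda>\<phi>. \<Sum>k\<le>n. \<Sum>j\<le>n. (a k * a j) * (cos (of_int (int k - int j) * \<phi>) * f \<phi>)) has_integral
      (\<Sum>k\<le>n. \<Sum>j\<le>n. (a k * a j) * \<Gamma> (int k - int j))) {-pi..pi}"
    by (intro has_integral_sum finite_atMost has_integral_mult_right G)
  moreover have "(\<lambda>\<phi>. \<Sum>k\<le>n. \<Sum>j\<le>n. (a k * a j) * (cos (of_int (int k - int j) * \<phi>) * f \<phi>))
      = (\<lambda>\<phi>. f \<phi> * Q n a \<phi>)"
    by (rule ext) (simp add: Q_def sum_distrib_left mult_ac)
  ultimately show ?thesis by (simp add: mult_ac)
qed

lemma dcovA:
  fixes \<Gamma> :: "int \<Rightarrow> real"
  assumes even: "\<And>m. \<Gamma> (- m) = \<Gamma> m"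
  shows "(covA \<Gamma> n has_real_derivative 2 * covB \<Gamma> n x) (at x)"
proof -
  have d: "(covA \<Gamma> n has_real_derivative (\<Sum>k\<le>n. \<Sum>j\<le>n. \<Gamma> (int k - int j) * (real (k + j) * x ^ (k + j - Suc 0)))) (at x)"
    unfolding covA_def[abs_def] by (rule DERIV_sum, rule DERIV_sum, rule DERIV_cmult, rule DERIV_pow)
  have "(\<Sum>k\<le>n. \<Sum>j\<le>n. \<Gamma> (int k - int j) * (real (k + j) * x ^ (k + j - Suc 0)))
      = (\<Sum>k\<le>n. \<Sum>j\<le>n. \<Gamma> (int k - int j) * real k * x ^ (k + j - 1))
      + (\<Sum>k\<le>n. \<Sum>j\<le>n. \<Gamma> (int k - int j) * real j * x ^ (k + j - 1))"
    by (simp add: sum.distrib[symmetric] algebra_simps)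
  also have "(\<Sum>k\<le>n. \<Sum>j\<le>n. \<Gamma> (int k - int j) * real j * x ^ (k + j - 1))
      = (\<Sum>j\<le>n. \<Sum>k\<le>n. \<Gamma> (int k - int j) * real j * x ^ (k + j - 1))"
    by (rule sum.swap)
  also have "\<dots> = (\<Sum>k\<le>n. \<Sum>j\<le>n. \<Gamma> (int k - int j) * real k * x ^ (k + j - 1))"
  proof (intro sum.cong refl)
    fix j k
    have "\<Gamma> (int j - int k) = \<Gamma> (int k - int j)" using even[of "int k - int j"] by simp
    thus "\<Gamma> (int k - int j) * real j * x ^ (k + j - 1) = \<Gamma> (int j - int k) * real j * x ^ (j + k - 1)"
      by (simp add: add.commute)
  qed
  finally have "(\<Sum>k\<le>n. \<Sum>j\<le>n. \<Gamma> (int k - int j) * (real (k + j) * x ^ (k + j - Suc 0))) = 2 * covB \<Gamma> n x"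
    by (simp add: covB_def)
  with d show ?thesis by simp
qed



lemma side:
  fixes A B C :: "real \<Rightarrow> real" and K c :: real and n :: nat
  assumes dA: "\<And>x. 1 \<le> x \<Longrightarrow> (A has_real_derivative 2 * B x) (at x)"
    and cA: "continuous_on UNIV A" and cB: "continuous_on UNIV B" and cC: "continuous_on UNIV C"
    and monoA: "\<And>x y. 1 \<le> x \<Longrightarrow> x \<le> y \<Longrightarrow> A x \<le> A y"
    and c: "0 < c"
    and low: "\<And>x. 1 \<le> x \<Longrightarrow> c * x \<le> A x"
    and low1: "c * (real n + 1) \<le> A 1"
  shows "Fgen A B C K absolutely_integrable_on {1..} \<and>
         \<bar>integral {1..} (Fgen A B C K)\<bar> \<le> 2 * sqrt 2 / sqrt pi * \<bar>K\<bar> / sqrt (c * (real n + 1))"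
proof -
  have pos: "0 < c * (real n + 1)" using c by simp
  have A1: "0 < A 1" using pos low1 by linarith
  have Ainf: "filterlim A at_top at_top"
  proof (rule filterlim_at_top_mono)
    show "filterlim (\<lambda>x. c * x) at_top at_top"
      by (rule filterlim_tendsto_pos_mult_at_top[OF tendsto_const c filterlim_ident])
    show "eventually (\<lambda>x. c * x \<le> A x) at_top"
      using eventually_ge_at_top[of "1::real"] by eventually_elim (rule low)
  qed
  from core[OF dA cA cB cC monoA A1 Ainf, of K]
  have r: "Fgen A B C K absolutely_integrable_on {1..}"
     "\<bar>integral {1..} (Fgen A B C K)\<bar> \<le> 2 * sqrt 2 / sqrt pi * \<bar>K\<bar> / sqrt (A 1)" by auto
  have "2 * sqrt 2 / sqrt pi * \<bar>K\<bar> / sqrt (A 1) \<le> 2 * sqrt 2 / sqrt pi * \<bar>K\<bar> / sqrt (c * (real n + 1))"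
    using pos low1 by (intro divide_left_mono mult_pos_pos) auto
  with r show ?thesis by linarith
qed

lemma sq_sum_ge:
  fixes x :: real
  assumes "1 \<le> x" "1 \<le> n"
  shows "x \<le> (\<Sum>k\<le>n. (x ^ k)\<^sup>2)"
proof -
  have "x = x ^ 1" by simp
  also have "\<dots> \<le> x ^ n" using assms by (intro power_increasing) auto
  also have "\<dots> \<le> (x ^ n)\<^sup>2"
  proof -
    have "1 \<le> x ^ n" using assms by simp
    hence "x ^ n * 1 \<le> x ^ n * x ^ n" by (intro mult_left_mono) auto
    thus ?thesis by (simp add: power2_eq_square)
  qed
  also have "\<dots> \<le> (\<Sum>k\<le>n. (x ^ k)\<^sup>2)"
    by (rule member_le_sum) auto
  finally show ?thesis .
qed

lemma sq_sum_one: "(\<Sum>k\<le>n. (((1::real)) ^ k)\<^sup>2) = real n + 1" "(\<Sum>k\<le>n. ((-(1::real)) ^ k)\<^sup>2) = real n + 1"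
  by (simp_all add: power_mult[symmetric] mult.commute[of _ 2] power_mult)



theorem lemma3p1:
  fixes \<Gamma> :: "int \<Rightarrow> real" and f :: "real \<Rightarrow> real" and K :: "nat \<Rightarrow> real"
  assumes f_cont: "continuous_on {-pi..pi} f"
    and f_pos: "\<And>\<phi>. \<phi> \<in> {-pi..pi} \<Longrightarrow> f \<phi> > 0"
    and spectral: "\<And>k. complex_of_real (\<Gamma> k) =
        integral {-pi..pi} (\<lambda>\<phi>. exp (- \<i> * of_int k * of_real \<phi>) * of_real (f \<phi>))"
    and Gamma0: "\<Gamma> 0 = 1"
    and K_small: "K \<in> o(\<lambda>n. sqrt (real n / ln (ln (real n))))"
  shows "(\<forall>\<^sub>F n in sequentially. (\<lambda>x. F2 \<Gamma> n (K n) x) integrable_on {1..})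
       \<and> (\<lambda>n. integral {1..} (\<lambda>x. F2 \<Gamma> n (K n) x)) \<longlonglongrightarrow> 0
       \<and> (\<forall>\<^sub>F n in sequentially. (\<lambda>x. F2 \<Gamma> n (K n) x) integrable_on {..-1})
       \<and> (\<lambda>n. integral {..-1} (\<lambda>x. F2 \<Gamma> n (K n) x)) \<longlonglongrightarrow> 0"
proof -
  have Gc: "\<And>m. ((\<lambda>\<phi>. cos (of_int m * \<phi>) * f \<phi>) has_integral \<Gamma> m) {-pi..pi}"
    by (rule Gcos[OF f_cont spectral])
  have even: "\<Gamma> (- m) = \<Gamma> m" for m
  proof -
    have "((\<lambda>\<phi>. cos (of_int (-m) * \<phi>) * f \<phi>) has_integral \<Gamma> (-m)) {-pi..pi}" by (rule Gc)
    moreover have "(\<lambda>\<phi>. cos (of_int (-m) * \<phi>) * f \<phi>) = (\<lambda>\<phi>. cos (of_int m * \<phi>) * f \<phi>)"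
      by (rule ext) simp
    ultimately have "((\<lambda>\<phi>. cos (of_int m * \<phi>) * f \<phi>) has_integral \<Gamma> (-m)) {-pi..pi}" by simp
    thus "\<Gamma> (-m) = \<Gamma> m" by (rule has_integral_unique[OF _ Gc[of m]])
  qed
  obtain mf where mf: "mf > 0" "\<And>\<phi>. \<phi> \<in> {-pi..pi} \<Longrightarrow> mf \<le> f \<phi>"
  proof -
    have "{-pi..pi} \<noteq> {}" using pi_ge_zero by simp
    from continuous_attains_inf[OF compact_Icc this f_cont]
    obtain \<phi>0 where "\<phi>0 \<in> {-pi..pi}" "\<forall>\<phi>\<in>{-pi..pi}. f \<phi>0 \<le> f \<phi>" by blast
    thus ?thesis using that[of "f \<phi>0"] f_pos by blast
  qed
  define c where "c = 2 * pi * mf"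
  have c: "0 < c" using mf by (simp add: c_def)
  have lower: "c * (\<Sum>k\<le>n. (a k)\<^sup>2) \<le> (\<Sum>k\<le>n. \<Sum>j\<le>n. \<Gamma> (int k - int j) * (a k * a j))" for n a
  proof -
    have "((\<lambda>\<phi>. mf * Q n a \<phi>) has_integral mf * (2 * pi * (\<Sum>k\<le>n. (a k)\<^sup>2))) {-pi..pi}"
      by (intro has_integral_mult_right Q_int)
    hence "mf * (2 * pi * (\<Sum>k\<le>n. (a k)\<^sup>2)) \<le> (\<Sum>k\<le>n. \<Sum>j\<le>n. \<Gamma> (int k - int j) * (a k * a j))"
      by (rule has_integral_le[OF _ quad[OF Gc]]) (use mf Q_nonneg in \<open>auto intro!: mult_right_mono\<close>)
    thus ?thesis by (simp add: c_def mult_ac)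
  qed
  have monoS: "(\<Sum>k\<le>n. \<Sum>j\<le>n. \<Gamma> (int k - int j) * (a k * a j)) \<le> (\<Sum>k\<le>n. \<Sum>j\<le>n. \<Gamma> (int k - int j) * (b k * b j))"
    if ab: "\<And>\<phi>. Q n a \<phi> \<le> Q n b \<phi>" for n a b
  proof (rule has_integral_le[OF quad[OF Gc] quad[OF Gc]])
    fix \<phi> :: real assume "\<phi> \<in> {-pi..pi}"
    hence "0 \<le> f \<phi>" using mf by (meson less_eq_real_def order_trans)
    thus "f \<phi> * Q n a \<phi> \<le> f \<phi> * Q n b \<phi>" using ab by (intro mult_left_mono) auto
  qed
  have formP: "covA \<Gamma> n x = (\<Sum>k\<le>n. \<Sum>j\<le>n. \<Gamma> (int k - int j) * (x ^ k * x ^ j))" for n x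
    by (simp add: covA_def power_add)
  have formN: "covA \<Gamma> n (-x) = (\<Sum>k\<le>n. \<Sum>j\<le>n. \<Gamma> (int k - int j) * ((-x) ^ k * (-x) ^ j))" for n x
    by (simp add: covA_def power_add)
  have sqneg: "((-x) ^ k)\<^sup>2 = (x ^ k)\<^sup>2" for x :: real and k :: nat
    by (simp add: power2_eq_square power_mult_distrib[symmetric])
  define bnd where "bnd n = 2 * sqrt 2 / sqrt pi * \<bar>K n\<bar> / sqrt (c * (real n + 1))" for n
  have PN: "(\<lambda>x. F2 \<Gamma> n (K n) x) integrable_on {1..} \<and> \<bar>integral {1..} (\<lambda>x. F2 \<Gamma> n (K n) x)\<bar> \<le> bnd n
          \<and> (\<lambda>x. F2 \<Gamma> n (K n) x) integrable_on {..-1} \<and> \<bar>integral {..-1} (\<lambda>x. F2 \<Gamma> n (K n) x)\<bar> \<le> bnd n"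
    if n: "1 \<le> n" for n
  proof -
    have cA: "continuous_on UNIV (covA \<Gamma> n)" unfolding covA_def[abs_def] by (intro continuous_intros)
    have cB: "continuous_on UNIV (covB \<Gamma> n)" unfolding covB_def[abs_def] by (intro continuous_intros)
    have cC: "continuous_on UNIV (covC \<Gamma> n)" unfolding covC_def[abs_def] by (intro continuous_intros)
    have eqP: "(\<lambda>x. F2 \<Gamma> n (K n) x) = Fgen (covA \<Gamma> n) (covB \<Gamma> n) (covC \<Gamma> n) (K n)"
      by (simp add: fun_eq_iff F2_def Fgen_def Let_def)
    have eqN: "(\<lambda>x. F2 \<Gamma> n (K n) (-x)) = Fgen (\<lambda>x. covA \<Gamma> n (-x)) (\<lambda>x. - covB \<Gamma> n (-x)) (\<lambda>x. covC \<Gamma> n (-x)) (K n)"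
      by (simp add: fun_eq_iff F2_def Fgen_def Let_def)
    have sP: "Fgen (covA \<Gamma> n) (covB \<Gamma> n) (covC \<Gamma> n) (K n) absolutely_integrable_on {1..} \<and>
         \<bar>integral {1..} (Fgen (covA \<Gamma> n) (covB \<Gamma> n) (covC \<Gamma> n) (K n))\<bar> \<le> bnd n"
      unfolding bnd_def
    proof (rule side[OF _ cA cB cC _ c])
      show "(covA \<Gamma> n has_real_derivative 2 * covB \<Gamma> n x) (at x)" for x by (rule dcovA[of \<Gamma>, OF even])
      show "covA \<Gamma> n x \<le> covA \<Gamma> n y" if "1 \<le> x" "x \<le> y" for x y
        unfolding formP by (rule monoS) (rule Q_mono(1)[OF that])
      show "c * x \<le> covA \<Gamma> n x" if "1 \<le> x" for x
      proof -
        have "c * x \<le> c * (\<Sum>k\<le>n. (x ^ k)\<^sup>2)" using sq_sum_ge[OF that n] c by simp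
        also have "\<dots> \<le> covA \<Gamma> n x" unfolding formP using lower[where n=n and a="\<lambda>k. x ^ k"] .
        finally show ?thesis .
      qed
      show "c * (real n + 1) \<le> covA \<Gamma> n 1"
        using lower[where n=n and a="\<lambda>k. 1 ^ k"] unfolding formP sq_sum_one(1) .
    qed
    have sN: "Fgen (\<lambda>x. covA \<Gamma> n (-x)) (\<lambda>x. - covB \<Gamma> n (-x)) (\<lambda>x. covC \<Gamma> n (-x)) (K n) absolutely_integrable_on {1..} \<and>
         \<bar>integral {1..} (Fgen (\<lambda>x. covA \<Gamma> n (-x)) (\<lambda>x. - covB \<Gamma> n (-x)) (\<lambda>x. covC \<Gamma> n (-x)) (K n))\<bar> \<le> bnd n"
      unfolding bnd_def
    proof (rule side[OF _ _ _ _ _ c])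
      show "((\<lambda>x. covA \<Gamma> n (-x)) has_real_derivative 2 * (- covB \<Gamma> n (-x))) (at x)" for x
        using DERIV_chain2[OF dcovA[of \<Gamma>, OF even, of n "-x"] DERIV_minus[OF DERIV_ident, of x]] by simp
      show "continuous_on UNIV (\<lambda>x. covA \<Gamma> n (-x))" unfolding covA_def by (intro continuous_intros)
      show "continuous_on UNIV (\<lambda>x. - covB \<Gamma> n (-x))" unfolding covB_def by (intro continuous_intros)
      show "continuous_on UNIV (\<lambda>x. covC \<Gamma> n (-x))" unfolding covC_def by (intro continuous_intros)
      show "covA \<Gamma> n (-x) \<le> covA \<Gamma> n (-y)" if "1 \<le> x" "x \<le> y" for x y
        unfolding formN by (rule monoS) (rule Q_mono(2)[OF that])
      show "c * x \<le> covA \<Gamma> n (-x)" if "1 \<le> x" for x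
      proof -
        have "c * x \<le> c * (\<Sum>k\<le>n. (x ^ k)\<^sup>2)" using sq_sum_ge[OF that n] c by simp
        also have "\<dots> = c * (\<Sum>k\<le>n. ((-x) ^ k)\<^sup>2)" by (simp only: sqneg)
        also have "\<dots> \<le> covA \<Gamma> n (-x)" unfolding formN using lower[where n=n and a="\<lambda>k. (-x) ^ k"] .
        finally show ?thesis .
      qed
      show "c * (real n + 1) \<le> covA \<Gamma> n (-1)"
        using lower[where n=n and a="\<lambda>k. (-1) ^ k"] unfolding formN sq_sum_one(2) .
    qed
    have P1: "(\<lambda>x. F2 \<Gamma> n (K n) x) integrable_on {1..}"
      using sP eqP by (simp add: absolutely_integrable_on_def)
    have P2: "\<bar>integral {1..} (\<lambda>x. F2 \<Gamma> n (K n) x)\<bar> \<le> bnd n" using sP eqP by simp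
    have refl: "(\<lambda>x. F2 \<Gamma> n (K n) (-x)) absolutely_integrable_on {1..} \<and>
        integral {1..} (\<lambda>x. F2 \<Gamma> n (K n) (-x)) = integral {1..} (\<lambda>x. F2 \<Gamma> n (K n) (-x))
      \<longleftrightarrow> F2 \<Gamma> n (K n) absolutely_integrable_on {..-1} \<and> integral {..-1} (F2 \<Gamma> n (K n)) = integral {1..} (\<lambda>x. F2 \<Gamma> n (K n) (-x))"
      by (rule has_absolute_integral_reflect_real) (auto intro: sets_completionI_sets)
    have "(\<lambda>x. F2 \<Gamma> n (K n) (-x)) absolutely_integrable_on {1..}" using sN eqN by simp
    with refl have R: "F2 \<Gamma> n (K n) absolutely_integrable_on {..-1}"
      "integral {..-1} (F2 \<Gamma> n (K n)) = integral {1..} (\<lambda>x. F2 \<Gamma> n (K n) (-x))" by auto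
    have N1: "(\<lambda>x. F2 \<Gamma> n (K n) x) integrable_on {..-1}"
      using R(1) by (simp add: absolutely_integrable_on_def)
    have N2: "\<bar>integral {..-1} (\<lambda>x. F2 \<Gamma> n (K n) x)\<bar> \<le> bnd n"
      using R(2) sN eqN by simp
    show ?thesis using P1 P2 N1 N2 by blast
  qed
  have bnd0: "bnd \<longlonglongrightarrow> 0"
  proof -
    have "(\<lambda>n::nat. sqrt (real n / ln (ln (real n)))) \<in> O(\<lambda>n. sqrt (real n + 1))" by real_asymp
    with K_small have "K \<in> o(\<lambda>n. sqrt (real n + 1))" by (rule landau_o.small_big_trans)
    hence "(\<lambda>n. K n / sqrt (real n + 1)) \<longlonglongrightarrow> 0" by (rule smalloD_tendsto)
    hence "(\<lambda>n. 2 * sqrt 2 / sqrt pi / sqrt c * \<bar>K n / sqrt (real n + 1)\<bar>) \<longlonglongrightarrow> 2 * sqrt 2 / sqrt pi / sqrt c * 0"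
      by (intro tendsto_mult tendsto_const tendsto_rabs_zero)
    moreover have "(\<lambda>n. 2 * sqrt 2 / sqrt pi / sqrt c * \<bar>K n / sqrt (real n + 1)\<bar>) = bnd"
      using c by (simp add: fun_eq_iff bnd_def real_sqrt_mult abs_div)
    ultimately show ?thesis by simp
  qed
  have ev: "eventually (\<lambda>n. 1 \<le> n) sequentially" by (rule eventually_ge_at_top)
  show ?thesis
  proof (intro conjI)
    show "\<forall>\<^sub>F n in sequentially. (\<lambda>x. F2 \<Gamma> n (K n) x) integrable_on {1..}"
      using ev by eventually_elim (use PN in blast)
    show "\<forall>\<^sub>F n in sequentially. (\<lambda>x. F2 \<Gamma> n (K n) x) integrable_on {..-1}"
      using ev by eventually_elim (use PN in blast)
    show "(\<lambda>n. integral {1..} (\<lambda>x. F2 \<Gamma> n (K n) x)) \<longlonglongrightarrow> 0"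
    proof (rule Lim_null_comparison[OF _ bnd0])
      show "\<forall>\<^sub>F n in sequentially. norm (integral {1..} (\<lambda>x. F2 \<Gamma> n (K n) x)) \<le> bnd n"
        using ev by eventually_elim (use PN in auto)
    qed
    show "(\<lambda>n. integral {..-1} (\<lambda>x. F2 \<Gamma> n (K n) x)) \<longlonglongrightarrow> 0"
    proof (rule Lim_null_comparison[OF _ bnd0])
      show "\<forall>\<^sub>F n in sequentially. norm (integral {..-1} (\<lambda>x. F2 \<Gamma> n (K n) x)) \<le> bnd n"
        using ev by eventually_elim (use PN in auto)
    qed
  qed
qed


end
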